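(* Let $n$ and $B$ be powers of $2$ with $2\le B\le n$. Let $\sigma$ be uniformly random among the odd integers in $[n]$ and $b$ independently uniformly random in $[n]$. Fix $f,f'\in[n]$ with $f\neq f'$ and consider $o_{f,\sigma,b}(f')$ as an element of $\{-n/2,\dots,n/2-1\}$. Then: (i) if $n/B$ does not divide $f-f'$, then $o_{f,\sigma,b}(f')$ is uniformly distributed on $\mathbb{Z}_n$; (ii) if $f-f'\equiv j\,(n/B)\pmod n$ with $j$ even, then $\Pr\{o_{f,\sigma,b}(f')=\ell\}=0$ for all integers $\ell\in[-n/B,n/B]$; (iii) if $f-f'\equiv j\,(n/B)\pmod n$ with $j$ odd, then $\Pr\{o_{f,\sigma,b}(f')=\ell\}=0$ for all integers $\ell\in[-\frac{n}{2B},\frac{n}{2B})$, and $\Pr\{o_{f,\sigma,b}(f')=\ell\}=\frac2n$ for all integers $\ell\in[-\frac nB,-\frac n{2B})\cup[\frac n{2B},\frac nB]$.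
   Context: For $\sigma,b\in[n]$: $\pi_{\sigma,b}(f)=\sigma(f-b)\bmod n$; $h_{\sigma,b}(f)=\mathrm{round}((B/n)\pi_{\sigma,b}(f))$ with $\mathrm{round}(y)=\lfloor y+1/2\rfloor$; and the offset $o_{f,\sigma,b}(f')=\pi_{\sigma,b}(f')-(n/B)h_{\sigma,b}(f)\bmod n$. Since $B$ is even, the parity of $j$ is well defined modulo $B$. *)

theory Defs
  imports "HOL-Probability.Probability" "HOL-Number_Theory.Cong"
begin

definition rnd :: "real \<Rightarrow> int" where
  "rnd y = \<lfloor>y + 1/2\<rfloor>"

definition perm_pi :: "int \<Rightarrow> int \<Rightarrow> int \<Rightarrow> int \<Rightarrow> int" where
  "perm_pi n \<sigma> b f = (\<sigma> * (f - b)) mod n"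

definition hash_h :: "int \<Rightarrow> int \<Rightarrow> int \<Rightarrow> int \<Rightarrow> int \<Rightarrow> int" where
  "hash_h n B \<sigma> b f = rnd ((real_of_int B / real_of_int n) * real_of_int (perm_pi n \<sigma> b f))"

definition offset :: "int \<Rightarrow> int \<Rightarrow> int \<Rightarrow> int \<Rightarrow> int \<Rightarrow> int \<Rightarrow> int" where
  "offset n B f \<sigma> b f' = (perm_pi n \<sigma> b f' - (n div B) * hash_h n B \<sigma> b f) mod n"

definition centered :: "int \<Rightarrow> int \<Rightarrow> int" where
  "centered n x = (x + n div 2) mod n - n div 2"

definition sb_pmf :: "int \<Rightarrow> (int \<times> int) pmf" where
  "sb_pmf n = pmf_of_set ({s \<in> {0..<n}. odd s} \<times> {0..<n})"

end

theory Submission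
  imports Defs
begin



lemma L1:
  fixes a :: int and b :: nat
  assumes "a > 0"
  shows "card {s\<in>{0..<a*int b}. P (s mod a)} = b * card {s\<in>{0..<a}. P s}"
proof (induction b)
  case 0 then show ?case by simp
next
  case (Suc b)
  have split: "{s\<in>{0..<a*int (Suc b)}. P (s mod a)} =
     {s\<in>{0..<a*int b}. P (s mod a)} \<union> (\<lambda>s. s + a*int b) ` {s\<in>{0..<a}. P s}"
  proof (rule set_eqI, rule iffI)
    fix x assume x: "x \<in> {s\<in>{0..<a*int (Suc b)}. P (s mod a)}"
    show "x \<in> {s\<in>{0..<a*int b}. P (s mod a)} \<union> (\<lambda>s. s + a*int b) ` {s\<in>{0..<a}. P s}"
    proof (cases "x < a * int b")
      case True then show ?thesis using x by auto
    next
      case False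
      have r: "0 \<le> x - a*int b" "x - a*int b < a" using x False by (auto simp: algebra_simps)
      have "x mod a = (x - a*int b) mod a"
        by (metis add_diff_cancel_left' mod_mult_self3 mult.commute diff_add_cancel)
      also have "\<dots> = x - a*int b" using r by simp
      finally have "x - a*int b \<in> {s\<in>{0..<a}. P s}" using x r by auto
      then show ?thesis by (auto intro!: image_eqI[where x="x - a*int b"])
    qed
  next
    fix x assume "x \<in> {s\<in>{0..<a*int b}. P (s mod a)} \<union> (\<lambda>s. s + a*int b) ` {s\<in>{0..<a}. P s}"
    then show "x \<in> {s\<in>{0..<a*int (Suc b)}. P (s mod a)}"
      using assms by (auto simp: algebra_simps mod_pos_pos_trivial)
  qed
  have disj: "{s\<in>{0..<a*int b}. P (s mod a)} \<inter> (\<lambda>s. s + a*int b) ` {s\<in>{0..<a}. P s} = {}"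
    by auto
  have "card ((\<lambda>s. s + a*int b) ` {s\<in>{0..<a}. P s}) = card {s\<in>{0..<a}. P s}"
    by (rule card_image) (auto simp: inj_on_def)
  have fA: "finite {s\<in>{0..<a*int b}. P (s mod a)}" by (rule finite_subset[of _ "{0..<a*int b}"]) auto
  have fB: "finite ((\<lambda>s. s + a*int b) ` {s\<in>{0..<a}. P s})" by (rule finite_imageI, rule finite_subset[of _ "{0..<a}"]) auto
  have "card ({s\<in>{0..<a*int b}. P (s mod a)} \<union> (\<lambda>s. s + a*int b) ` {s\<in>{0..<a}. P s})
      = card {s\<in>{0..<a*int b}. P (s mod a)} + card ((\<lambda>s. s + a*int b) ` {s\<in>{0..<a}. P s})"
    by (rule card_Un_disjoint[OF fA fB disj])
  then show ?case using Suc split \<open>card ((\<lambda>s. s + a*int b) ` {s\<in>{0..<a}. P s}) = card {s\<in>{0..<a}. P s}\<close>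
    by simp
qed

lemma L2:
  fixes a w d :: int
  assumes "a > 0" "coprime w a"
  shows "card {s\<in>{0..<a}. P ((w * s + d) mod a)} = card {s\<in>{0..<a}. P s}"
proof -
  define \<phi> where "\<phi> s = (w * s + d) mod a" for s
  have inj: "inj_on \<phi> {0..<a}"
  proof (rule inj_onI)
    fix s t assume st: "s \<in> {0..<a}" "t \<in> {0..<a}" "\<phi> s = \<phi> t"
    then have "[w * s + d = w * t + d] (mod a)" by (simp add: \<phi>_def cong_def)
    then have "[w * s = w * t] (mod a)" by (metis cong_add_rcancel)
    then have "[s = t] (mod a)" using assms(2) cong_mult_lcancel by blast
    then show "s = t" using st by (simp add: cong_def mod_pos_pos_trivial)
  qed
  have sub: "\<phi> ` {0..<a} \<subseteq> {0..<a}" using assms by (auto simp: \<phi>_def)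
  have ci: "card (\<phi> ` {0..<a}) = card {0..<a}" by (rule card_image[OF inj])
  have img: "\<phi> ` {0..<a} = {0..<a}"
    by (rule card_subset_eq[OF _ sub]) (simp_all add: ci)
  have "\<phi> ` {s\<in>{0..<a}. P (\<phi> s)} = {t\<in>{0..<a}. P t}"
  proof (rule set_eqI, rule iffI)
    fix x assume "x \<in> \<phi> ` {s\<in>{0..<a}. P (\<phi> s)}"
    then show "x \<in> {t\<in>{0..<a}. P t}" using sub by blast
  next
    fix x assume x: "x \<in> {t\<in>{0..<a}. P t}"
    then have "x \<in> \<phi> ` {0..<a}" using img by simp
    then obtain s where "s \<in> {0..<a}" "x = \<phi> s" by blast
    then show "x \<in> \<phi> ` {s\<in>{0..<a}. P (\<phi> s)}" using x by blast
  qed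
  moreover have "card (\<phi> ` {s\<in>{0..<a}. P (\<phi> s)}) = card {s\<in>{0..<a}. P (\<phi> s)}"
    by (rule card_image) (rule inj_on_subset[OF inj], auto)
  ultimately show ?thesis by (simp add: \<phi>_def)
qed

lemma Lmod:
  fixes c0 g m t :: int
  assumes "0 \<le> c0" "c0 < g" "0 < m"
  shows "(c0 + g*t) mod (g*m) = c0 + g*(t mod m)"
proof -
  have g: "g > 0" using assms by simp
  have "t mod m < m" using assms by simp
  then have "t mod m \<le> m - 1" by simp
  then have "g*(t mod m) \<le> g*(m-1)" using g by (simp add: mult_left_mono)
  then have lt: "c0 + g*(t mod m) < g*m" using assms by (simp add: algebra_simps)
  have ge: "0 \<le> c0 + g*(t mod m)" using assms g by simp
  have tt: "m*(t div m) + t mod m = t" by (rule mult_div_mod_eq)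
  have "c0 + g*t = c0 + g*(m*(t div m) + t mod m)" by (simp only: tt)
  also have "\<dots> = (c0 + g*(t mod m)) + (g*m)*(t div m)" by (simp only: algebra_simps)
  finally have "c0 + g*t = (c0 + g*(t mod m)) + (g*m)*(t div m)" .
  then have "(c0 + g*t) mod (g*m) = ((c0 + g*(t mod m)) + (g*m)*(t div m)) mod (g*m)" by (rule arg_cong)
  also have "\<dots> = (c0 + g*(t mod m)) mod (g*m)" by (rule mod_mult_self2)
  also have "\<dots> = c0 + g*(t mod m)" using lt ge by (simp only: mod_pos_pos_trivial)
  finally show ?thesis .
qed

lemma centered_cong: "[centered n y = y] (mod n)"
  unfolding centered_def cong_def by (simp add: mod_diff_left_eq)

lemma centered_range:
  assumes "n > 0" "even n"
  shows "centered n y \<in> {-(n div 2)..<n div 2}"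
proof -
  have a: "0 \<le> (y + n div 2) mod n" "(y + n div 2) mod n < n" using assms by simp_all
  have "n = 2 * (n div 2)" using assms by simp
  then show ?thesis using a unfolding centered_def by simp
qed



lemma hash_eq:
  fixes n B q x :: int
  assumes "n = B*q" "0<B" "0<q" "even q \<or> q = 1"
  shows "rnd (real_of_int B / real_of_int n * real_of_int x) = (x + q div 2) div q"
proof -
  have e: "real_of_int B / real_of_int n * real_of_int x = real_of_int x / real_of_int q"
    using assms by (simp add: field_simps)
  show ?thesis
  proof (cases "q = 1")
    case True
    have "\<lfloor>real_of_int x + 1/2\<rfloor> = x" by (simp add: floor_eq_iff)
    then show ?thesis using True e by (simp add: rnd_def)
  next
    case False
    then obtain k where k: "q = 2*k" using assms by auto
    have "real_of_int x / real_of_int q + 1/2 = real_of_int (x + k) / real_of_int q"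
      using assms k by (simp add: field_simps)
    moreover have fl: "\<lfloor>real_of_int (x + k) / real_of_int q\<rfloor> = (x + k) div q"
      by (rule floor_divide_of_int_eq)
    ultimately have "rnd (real_of_int x / real_of_int q) = (x + k) div q"
      by (simp only: rnd_def)
    then show ?thesis using e k by simp
  qed
qed

lemma count_b:
  fixes n B q \<sigma> f f' l :: int
  assumes nBq: "n = B*q" and B0: "0<B" and q0: "0<q" and qe: "even q \<or> q = 1"
    and cop: "coprime \<sigma> n" and ndiv: "n div B = q"
  shows "card {b\<in>{0..<n}. [centered n (offset n B f \<sigma> b f') = l] (mod n)}
       = (if (l + q div 2 + \<sigma>*(f-f')) mod n < q then nat B else 0)"
proof -
  define h where "h = q div 2"
  define w where "w = (l + h + \<sigma>*(f-f')) mod n"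
  have n0: "n > 0" using nBq B0 q0 by simp
  have qn: "q \<le> n" using nBq B0 q0 by simp
  have qdvd: "q dvd n" using nBq by simp
  have key: "[centered n (offset n B f \<sigma> b f') = l] (mod n) \<longleftrightarrow>
             ((-\<sigma>)*b + (\<sigma>*f + h)) mod n mod q = w" for b
  proof -
    define x where "x = \<sigma>*(f-b) mod n"
    define Z where "Z = ((-\<sigma>)*b + (\<sigma>*f + h)) mod n mod q"
    have hh: "hash_h n B \<sigma> b f = (x + h) div q"
      unfolding hash_h_def perm_pi_def x_def h_def using hash_eq[OF nBq B0 q0 qe] by simp
    have "offset n B f \<sigma> b f' = (\<sigma>*(f'-b) mod n - q*((x+h) div q)) mod n"
      by (simp add: offset_def perm_pi_def hh ndiv)
    also have "\<dots> = (\<sigma>*(f'-b) - q*((x+h) div q)) mod n" by (simp add: mod_diff_left_eq)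
    also have "\<sigma>*(f'-b) = \<sigma>*(f-b) - \<sigma>*(f-f')" by (simp add: algebra_simps)
    also have "(\<sigma>*(f-b) - \<sigma>*(f-f') - q*((x+h) div q)) mod n
             = (\<sigma>*(f-b) mod n - \<sigma>*(f-f') - q*((x+h) div q)) mod n"
      by (simp only: diff_diff_eq mod_diff_left_eq)
    also have "\<sigma>*(f-b) mod n - \<sigma>*(f-f') - q*((x+h) div q) = ((x+h) - q*((x+h) div q)) - h - \<sigma>*(f-f')"
      by (simp add: x_def)
    also have "(x+h) - q*((x+h) div q) = (x+h) mod q" by (simp add: minus_mult_div_eq_mod)
    also have "(x+h) mod q = Z"
    proof -
      have "(x+h) mod q = (x mod q + h) mod q" by (simp only: mod_add_left_eq)
      also have "x mod q = \<sigma>*(f-b) mod q" unfolding x_def using qdvd by (rule mod_mod_cancel)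
      also have "(\<sigma>*(f-b) mod q + h) mod q = (\<sigma>*(f-b) + h) mod q" by (simp only: mod_add_left_eq)
      also have "\<dots> = (\<sigma>*(f-b) + h) mod n mod q" using qdvd by (simp add: mod_mod_cancel)
      also have "\<sigma>*(f-b) + h = (-\<sigma>)*b + (\<sigma>*f + h)" by (simp add: algebra_simps)
      finally show ?thesis by (simp add: Z_def)
    qed
    finally have off: "offset n B f \<sigma> b f' = (Z - h - \<sigma>*(f-f')) mod n" .
    have "[centered n (offset n B f \<sigma> b f') = l] (mod n) \<longleftrightarrow> [offset n B f \<sigma> b f' = l] (mod n)"
      using centered_cong by (meson cong_sym cong_trans)
    also have "\<dots> \<longleftrightarrow> [Z - h - \<sigma>*(f-f') = l] (mod n)" by (simp add: off cong_def)
    also have "\<dots> \<longleftrightarrow> [(Z - h - \<sigma>*(f-f')) + (h + \<sigma>*(f-f')) = l + (h + \<sigma>*(f-f'))] (mod n)"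
      by (rule cong_add_rcancel[symmetric])
    also have "\<dots> \<longleftrightarrow> [Z = l + h + \<sigma>*(f-f')] (mod n)" by (simp add: add.assoc)
    also have "\<dots> \<longleftrightarrow> Z = w"
    proof -
      have "0 \<le> Z" "Z < q" using q0 by (simp_all add: Z_def)
      then have "Z mod n = Z" using qn by simp
      then show ?thesis by (simp add: cong_def w_def)
    qed
    finally show ?thesis by (simp add: Z_def)
  qed
  have "card {b\<in>{0..<n}. [centered n (offset n B f \<sigma> b f') = l] (mod n)}
      = card {b\<in>{0..<n}. ((-\<sigma>)*b + (\<sigma>*f + h)) mod n mod q = w}"
    by (simp only: key)
  also have "\<dots> = card {z\<in>{0..<n}. z mod q = w}"
    using L2[OF n0, of "-\<sigma>" "\<lambda>z. z mod q = w" "\<sigma>*f + h"] cop by simp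
  also have "\<dots> = nat B * card {s\<in>{0..<q}. s = w}"
    using L1[OF q0, of "nat B" "\<lambda>s. s = w"] nBq B0 by (simp add: mult.commute)
  also have "card {s\<in>{0..<q}. s = w} = (if w < q then 1 else 0)"
  proof -
    have "0 \<le> w" using n0 by (simp add: w_def)
    then have "{s\<in>{0..<q}. s = w} = (if w < q then {w} else {})" by auto
    then show ?thesis by simp
  qed
  finally show ?thesis by (simp add: w_def h_def)
qed



lemma card_odds:
  fixes n :: int
  assumes "n > 0" "even n"
  shows "{s\<in>{0..<n}. odd s} = (\<lambda>k. 2*k+1) ` {0..<n div 2}"
    and "card {s\<in>{0..<n}. odd s} = nat (n div 2)"
proof -
  show e: "{s\<in>{0..<n}. odd s} = (\<lambda>k. 2*k+1) ` {0..<n div 2}"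
  proof (rule set_eqI, rule iffI)
    fix x assume x: "x \<in> {s\<in>{0..<n}. odd s}"
    then have "x = 2*(x div 2) + 1" by simp
    moreover have "x div 2 \<in> {0..<n div 2}" using x assms by auto
    ultimately show "x \<in> (\<lambda>k. 2*k+1) ` {0..<n div 2}" by blast
  next
    fix x assume "x \<in> (\<lambda>k. 2*k+1) ` {0..<n div 2}"
    then obtain k where "k \<in> {0..<n div 2}" "x = 2*k+1" by blast
    then show "x \<in> {s\<in>{0..<n}. odd s}" using assms by auto
  qed
  have "card ((\<lambda>k. 2*k+1) ` {0..<n div 2}) = card {0..<n div 2}"
    by (rule card_image) (auto simp: inj_on_def)
  then show "card {s\<in>{0..<n}. odd s} = nat (n div 2)" using e by simp
qed

lemma prob_sb:
  fixes n :: int and P :: "int \<Rightarrow> int \<Rightarrow> bool"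
  assumes n0: "n > 0" and ne: "even n"
  shows "measure_pmf.prob (sb_pmf n) {(\<sigma>, b). P \<sigma> b}
    = real (\<Sum>\<sigma>\<in>{s\<in>{0..<n}. odd s}. card {b\<in>{0..<n}. P \<sigma> b}) / (real_of_int (n div 2) * real_of_int n)"
proof -
  define S where "S = {s\<in>{0..<n}. odd s}"
  define T where "T = {0..<n}"
  have fS: "finite S" unfolding S_def by (rule finite_subset[of _ "{0..<n}"]) auto
  have fT: "finite T" unfolding T_def by simp
  have "n \<ge> 2" using n0 ne by presburger
  then have "1 \<in> S" unfolding S_def by simp
  have "0 \<in> T" using n0 unfolding T_def by simp
  then have ne2: "S \<times> T \<noteq> {}" using \<open>1 \<in> S\<close> by blast
  have m: "measure_pmf.prob (sb_pmf n) {(\<sigma>, b). P \<sigma> b} = card ((S\<times>T) \<inter> {(\<sigma>, b). P \<sigma> b}) / card (S\<times>T)"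
  proof -
    have "sb_pmf n = pmf_of_set (S\<times>T)" by (simp add: sb_pmf_def S_def T_def)
    moreover have "measure_pmf.prob (pmf_of_set (S\<times>T)) {(\<sigma>, b). P \<sigma> b} = card ((S\<times>T) \<inter> {(\<sigma>, b). P \<sigma> b}) / card (S\<times>T)"
      by (rule measure_pmf_of_set) (use ne2 fS fT in auto)
    ultimately show ?thesis by simp
  qed
  have "(S\<times>T) \<inter> {(\<sigma>, b). P \<sigma> b} = Sigma S (\<lambda>\<sigma>. {b\<in>T. P \<sigma> b})" by auto
  then have c1: "card ((S\<times>T) \<inter> {(\<sigma>, b). P \<sigma> b}) = (\<Sum>\<sigma>\<in>S. card {b\<in>T. P \<sigma> b})"
    using fS fT by simp
  have cS: "card S = nat (n div 2)" unfolding S_def using card_odds[OF n0 ne] by simp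
  have cT: "card T = nat n" unfolding T_def by simp
  have "real (card (S\<times>T)) = real_of_int (n div 2) * real_of_int n"
    using cS cT n0 ne by (simp add: card_cartesian_product)
  then show ?thesis using m c1 by (simp add: S_def T_def)
qed

lemma odd_decomp:
  fixes x :: int
  assumes "x \<noteq> 0"
  shows "\<exists>a w. x = 2^a * w \<and> odd w"
  using assms
proof (induction "nat \<bar>x\<bar>" arbitrary: x rule: less_induct)
  case less
  show ?case
  proof (cases "odd x")
    case True then show ?thesis by (rule_tac x=0 in exI) simp
  next
    case False
    then obtain y where y: "x = 2*y" by auto
    then have "y \<noteq> 0" "nat \<bar>y\<bar> < nat \<bar>x\<bar>" using less.prems by auto
    then obtain a w where "y = 2^a * w" "odd w" using less.hyps by blast
    then show ?thesis using y by (rule_tac x="Suc a" in exI) auto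
  qed
qed

lemma coprime_odd_pow2:
  fixes s :: int
  assumes "odd s"
  shows "coprime s (2^k)"
  using assms by simp



lemma red_cong:
  fixes n q j \<sigma> c \<Delta> :: int
  assumes "[\<Delta> = j*q] (mod n)"
  shows "(c + \<sigma>*\<Delta>) mod n = (c + q*(\<sigma>*j)) mod n"
proof -
  have "[c + \<sigma>*\<Delta> = c + \<sigma>*(j*q)] (mod n)"
    by (intro cong_add cong_mult cong_refl assms)
  then show ?thesis by (simp add: cong_def algebra_simps)
qed

lemma mod_form:
  fixes n B q c t :: int
  assumes "n = B*q"
  shows "\<exists>m. (c + q*t) mod n = c + q*m \<and> [m = t] (mod B)"
proof -
  define k where "k = (c + q*t) div n"
  have "(c + q*t) mod n = (c + q*t) - k * n" unfolding k_def by (simp add: minus_div_mult_eq_mod)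
  also have "\<dots> = c + q*(t - B*k)" using assms by (simp add: algebra_simps)
  finally have "(c + q*t) mod n = c + q*(t - B*k)" .
  moreover have "[t - B*k = t] (mod B)" by (simp add: cong_iff_dvd_diff)
  ultimately show ?thesis by blast
qed

lemma zero_lemma:
  fixes n B q j \<sigma> c \<Delta> :: int
  assumes nBq: "n = B*q" and B0: "0<B" and q0: "0<q" and cg: "[\<Delta> = j*q] (mod n)"
    and hyp: "\<And>m. [m = \<sigma>*j] (mod B) \<Longrightarrow> \<not> (0 \<le> c + q*m \<and> c + q*m < q)"
  shows "\<not> (c + \<sigma>*\<Delta>) mod n < q"
proof
  assume a: "(c + \<sigma>*\<Delta>) mod n < q"
  obtain m where m: "(c + q*(\<sigma>*j)) mod n = c + q*m" "[m = \<sigma>*j] (mod B)"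
    using mod_form[OF nBq] by blast
  have n0: "n > 0" using nBq B0 q0 by simp
  have "(c + \<sigma>*\<Delta>) mod n = c + q*m" using red_cong[OF cg] m(1) by simp
  moreover have "0 \<le> (c + \<sigma>*\<Delta>) mod n" using n0 by simp
  ultimately show False using hyp[OF m(2)] a by simp
qed

lemma part2_sigma:
  fixes n B q j \<sigma> l h \<Delta> :: int
  assumes nBq: "n = B*q" and B0: "0<B" and q0: "0<q" and eB: "even B" and ej: "even j"
    and cop: "coprime \<sigma> B" and nd: "\<not> n dvd \<Delta>" and cg: "[\<Delta> = j*q] (mod n)"
    and l1: "-q \<le> l" and l2: "l \<le> q" and h1: "0 \<le> h" and h2: "h < q"
  shows "\<not> (l + h + \<sigma>*\<Delta>) mod n < q"
proof (rule zero_lemma[OF nBq B0 q0 cg])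
  fix m assume m: "[m = \<sigma>*j] (mod B)"
  have "B dvd (m - \<sigma>*j)" using m by (simp add: cong_iff_dvd_diff)
  then have "2 dvd (m - \<sigma>*j)" using eB dvd_trans by blast
  then have em: "even m" using ej by simp
  have m0: "m \<noteq> 0"
  proof
    assume "m = 0"
    then have "[\<sigma>*j = 0] (mod B)" using m by (simp add: cong_sym_eq)
    then have "B dvd \<sigma>*j" by (simp only: cong_0_iff)
    moreover have "coprime B \<sigma>" using cop by (simp add: coprime_commute)
    ultimately have "B dvd j" using coprime_dvd_mult_right_iff[of B \<sigma> j] by simp
    then obtain r where "j = B*r" by blast
    then have "j*q = n*r" using nBq by (simp add: algebra_simps)
    then have "[\<Delta> = 0] (mod n)" using cg by (simp add: cong_def)
    then show False using nd by (simp add: cong_0_iff)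
  qed
  show "\<not> (0 \<le> l + h + q*m \<and> l + h + q*m < q)"
  proof (cases "m > 0")
    case True
    then have "m \<ge> 2" using em m0 by presburger
    then have "q*m \<ge> q*2" using q0 by (intro mult_left_mono) auto
    then show ?thesis using l1 h1 by linarith
  next
    case False
    then have "m \<le> -2" using em m0 by presburger
    then have "q*m \<le> q*(-2)" using q0 by (intro mult_left_mono) auto
    then show ?thesis using l2 h2 by linarith
  qed
qed

lemma part3a_sigma:
  fixes n B q j \<sigma> l h \<Delta> :: int
  assumes nBq: "n = B*q" and B0: "0<B" and q0: "0<q" and eB: "even B" and oj: "odd j"
    and os: "odd \<sigma>" and cg: "[\<Delta> = j*q] (mod n)"
    and c1: "0 \<le> l + h" and c2: "l + h < q"
  shows "\<not> (l + h + \<sigma>*\<Delta>) mod n < q"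
proof (rule zero_lemma[OF nBq B0 q0 cg])
  fix m assume m: "[m = \<sigma>*j] (mod B)"
  have "B dvd (m - \<sigma>*j)" using m by (simp add: cong_iff_dvd_diff)
  then have "2 dvd (m - \<sigma>*j)" using eB dvd_trans by blast
  then have om: "odd m" using oj os by simp
  show "\<not> (0 \<le> l + h + q*m \<and> l + h + q*m < q)"
  proof (cases "m > 0")
    case True
    then have "m \<ge> 1" by simp
    then have "q*m \<ge> q*1" using q0 by (intro mult_left_mono) auto
    then show ?thesis using c1 by linarith
  next
    case False
    then have "m \<le> -1" using om by presburger
    then have "q*m \<le> q*(-1)" using q0 by (intro mult_left_mono) auto
    then show ?thesis using c2 by linarith
  qed
qed



lemma part3b:
  fixes n B q j c c0 e \<Delta> :: int
  assumes nBq: "n = B*q" and B0: "0<B" and q0: "0<q" and eB: "even B" and oj: "odd j"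
    and cop: "coprime j B" and cg: "[\<Delta> = j*q] (mod n)"
    and cc: "c = c0 + q*e" and c01: "0 \<le> c0" and c02: "c0 < q" and oe: "odd e"
  shows "card {\<sigma>\<in>{s\<in>{0..<n}. odd s}. (c + \<sigma>*\<Delta>) mod n < q} = nat q"
proof -
  have eqv: "(c + \<sigma>*\<Delta>) mod n < q \<longleftrightarrow> (j*\<sigma> + e) mod B = 0" for \<sigma>
  proof -
    have "(c + \<sigma>*\<Delta>) mod n = (c + q*(\<sigma>*j)) mod n" by (rule red_cong[OF cg])
    also have "c + q*(\<sigma>*j) = c0 + q*(j*\<sigma> + e)" using cc by (simp add: algebra_simps)
    also have "(c0 + q*(j*\<sigma> + e)) mod n = c0 + q*((j*\<sigma> + e) mod B)"
      unfolding nBq mult.commute[of B q] by (rule Lmod[OF c01 c02 B0])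
    finally have E: "(c + \<sigma>*\<Delta>) mod n = c0 + q*((j*\<sigma> + e) mod B)" .
    show ?thesis
    proof
      assume a: "(c + \<sigma>*\<Delta>) mod n < q"
      show "(j*\<sigma> + e) mod B = 0"
      proof (rule ccontr)
        assume "(j*\<sigma> + e) mod B \<noteq> 0"
        moreover have "0 \<le> (j*\<sigma> + e) mod B" using B0 by simp
        ultimately have "(j*\<sigma> + e) mod B \<ge> 1" by linarith
        then have "q*((j*\<sigma> + e) mod B) \<ge> q*1" using q0 by (intro mult_left_mono) auto
        then show False using a E c01 by linarith
      qed
    next
      assume "(j*\<sigma> + e) mod B = 0"
      then show "(c + \<sigma>*\<Delta>) mod n < q" using E c02 by simp
    qed
  qed
  have set_eq: "{\<sigma>\<in>{s\<in>{0..<n}. odd s}. (c + \<sigma>*\<Delta>) mod n < q}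
      = {\<sigma>\<in>{0..<B * int (nat q)}. (j*(\<sigma> mod B) + e) mod B = 0}"
  proof (rule set_eqI)
    fix \<sigma>
    have r: "(j*(\<sigma> mod B) + e) mod B = (j*\<sigma> + e) mod B"
      by (metis mod_add_left_eq mod_mult_right_eq)
    have od: "(j*\<sigma> + e) mod B = 0 \<Longrightarrow> odd \<sigma>"
    proof -
      assume "(j*\<sigma> + e) mod B = 0"
      then have "B dvd (j*\<sigma> + e)" by (simp add: mod_eq_0_iff_dvd)
      then have "2 dvd (j*\<sigma> + e)" using eB dvd_trans by blast
      then show "odd \<sigma>" using oe by auto
    qed
    show "\<sigma> \<in> {\<sigma>\<in>{s\<in>{0..<n}. odd s}. (c + \<sigma>*\<Delta>) mod n < q} \<longleftrightarrow>
          \<sigma> \<in> {\<sigma>\<in>{0..<B * int (nat q)}. (j*(\<sigma> mod B) + e) mod B = 0}"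
      using eqv[of \<sigma>] r od q0 nBq by auto
  qed
  have "card {\<sigma>\<in>{0..<B * int (nat q)}. (j*(\<sigma> mod B) + e) mod B = 0}
        = nat q * card {t\<in>{0..<B}. (j*t + e) mod B = 0}"
    by (rule L1[OF B0])
  also have "card {t\<in>{0..<B}. (j*t + e) mod B = 0} = card {s\<in>{0..<B}. s = 0}"
    using L2[OF B0 cop, of "\<lambda>z. z = 0" e] by simp
  also have "{s\<in>{0..<B}. s = 0} = {0}" using B0 by auto
  finally show ?thesis using set_eq by simp
qed

lemma part1:
  fixes n B q c p w g Q M \<Delta> :: int
  assumes nBq: "n = B*q" and B0: "0<B" and q0: "0<q" and D: "\<Delta> = p*w" and ow: "odd w"
    and gd: "g = 2*p" and qQ: "q = g*Q" and nM: "n = g*M" and p0: "0 < p" and M0: "0 < M"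
    and Q0: "0 \<le> Q" and QM: "Q \<le> M" and cop: "coprime w M"
  shows "card {\<sigma>\<in>{s\<in>{0..<n}. odd s}. (c + \<sigma>*\<Delta>) mod n < q} = nat (p*Q)"
proof -
  have n0: "n > 0" using nBq B0 q0 by simp
  have ne: "even n" using nM gd by simp
  have g0: "g > 0" using gd p0 by simp
  have n2: "n div 2 = M*p" using nM gd by simp
  define C where "C = c + \<Delta>"
  define d where "d = C div g"
  define R where "R t = ((w*t + d) mod M < Q)" for t
  have key: "(c + (2*k+1)*\<Delta>) mod n < q \<longleftrightarrow> R (k mod M)" for k
  proof -
    have cdec: "C mod g + g * d = C" unfolding d_def by (rule mod_mult_div_eq)
    have "c + (2*k+1)*\<Delta> = C + g*(w*k)" unfolding C_def using D gd by (simp add: algebra_simps)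
    also have "C mod g + g*(d + w*k) = (C mod g + g*d) + g*(w*k)" by (simp only: distrib_left add.assoc)
    then have "C + g*(w*k) = C mod g + g*(d + w*k)" using cdec by simp
    finally have e1: "c + (2*k+1)*\<Delta> = C mod g + g*(d + w*k)" .
    have cm1: "0 \<le> C mod g" "C mod g < g" using g0 by simp_all
    have "(C mod g + g*(d + w*k)) mod (g*M) = C mod g + g*((d + w*k) mod M)"
      by (rule Lmod[OF cm1 M0])
    then have "(c + (2*k+1)*\<Delta>) mod n = C mod g + g*((d + w*k) mod M)"
      using e1 nM by simp
    moreover have "(d + w*k) mod M = (w*(k mod M) + d) mod M"
      by (metis add.commute mod_add_left_eq mod_mult_right_eq)
    moreover have "C mod g + g*r < q \<longleftrightarrow> r < Q" for r
    proof
      assume a: "C mod g + g*r < q"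
      show "r < Q"
      proof (rule ccontr)
        assume "\<not> r < Q"
        then have "g*r \<ge> g*Q" using g0 by (intro mult_left_mono) auto
        moreover have "0 \<le> C mod g" using g0 by simp
        ultimately show False using a qQ by linarith
      qed
    next
      assume "r < Q"
      then have "r \<le> Q - 1" by simp
      then have "g*r \<le> g*(Q - 1)" using g0 by (intro mult_left_mono) auto
      moreover have "C mod g < g" using g0 by simp
      ultimately show "C mod g + g*r < q" using qQ by (simp add: algebra_simps)
    qed
    ultimately show ?thesis unfolding R_def by simp
  qed
  have img: "{s\<in>{0..<n}. odd s} = (\<lambda>k. 2*k+1) ` {0..<n div 2}" by (rule card_odds(1)[OF n0 ne])
  have "{\<sigma>\<in>{s\<in>{0..<n}. odd s}. (c + \<sigma>*\<Delta>) mod n < q}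
      = (\<lambda>k. 2*k+1) ` {k\<in>{0..<n div 2}. (c + (2*k+1)*\<Delta>) mod n < q}"
    unfolding img by auto
  then have "card {\<sigma>\<in>{s\<in>{0..<n}. odd s}. (c + \<sigma>*\<Delta>) mod n < q}
      = card {k\<in>{0..<n div 2}. (c + (2*k+1)*\<Delta>) mod n < q}"
    by (simp add: card_image inj_on_def)
  also have "\<dots> = card {k\<in>{0..<M * int (nat p)}. R (k mod M)}"
    using key n2 p0 by simp
  also have "\<dots> = nat p * card {t\<in>{0..<M}. R t}" by (rule L1[OF M0])
  also have "card {t\<in>{0..<M}. R t} = card {t\<in>{0..<M}. t < Q}"
    unfolding R_def by (rule L2[OF M0 cop])
  also have "{t\<in>{0..<M}. t < Q} = {0..<Q}" using QM by auto
  finally show ?thesis using p0 Q0 by (simp add: nat_mult_distrib)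
qed



lemma prob_formula:
  fixes n B q f f' l :: int
  assumes nBq: "n = B*q" and B0: "0<B" and q0: "0<q" and qe: "even q \<or> q = 1"
    and ndiv: "n div B = q" and ne: "even n" and copn: "\<And>\<sigma>. odd \<sigma> \<Longrightarrow> coprime \<sigma> n"
  shows "measure_pmf.prob (sb_pmf n) {(\<sigma>, b). [centered n (offset n B f \<sigma> b f') = l] (mod n)}
    = real (nat B * card {\<sigma>\<in>{s\<in>{0..<n}. odd s}. (l + q div 2 + \<sigma>*(f-f')) mod n < q})
       / (real_of_int (n div 2) * real_of_int n)"
proof -
  have n0: "n > 0" using nBq B0 q0 by simp
  define S where "S = {s\<in>{0..<n}. odd s}"
  have fS: "finite S" unfolding S_def by (rule finite_subset[of _ "{0..<n}"]) auto
  have "(\<Sum>\<sigma>\<in>S. card {b\<in>{0..<n}. [centered n (offset n B f \<sigma> b f') = l] (mod n)})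
      = (\<Sum>\<sigma>\<in>S. if (l + q div 2 + \<sigma>*(f-f')) mod n < q then nat B else 0)"
  proof (rule sum.cong)
    fix \<sigma> assume "\<sigma> \<in> S"
    then have "coprime \<sigma> n" using copn unfolding S_def by auto
    then show "card {b\<in>{0..<n}. [centered n (offset n B f \<sigma> b f') = l] (mod n)}
      = (if (l + q div 2 + \<sigma>*(f-f')) mod n < q then nat B else 0)"
      by (rule count_b[OF nBq B0 q0 qe _ ndiv])
  qed simp
  also have "\<dots> = (\<Sum>\<sigma>\<in>{\<sigma>\<in>S. (l + q div 2 + \<sigma>*(f-f')) mod n < q}. nat B)"
    by (rule sum.inter_filter[OF fS, symmetric])
  also have "\<dots> = nat B * card {\<sigma>\<in>S. (l + q div 2 + \<sigma>*(f-f')) mod n < q}" by simp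
  finally show ?thesis using prob_sb[OF n0 ne, of "\<lambda>\<sigma> b. [centered n (offset n B f \<sigma> b f') = l] (mod n)"]
    by (simp add: S_def)
qed

lemma cong_in_range:
  fixes a b n :: int
  assumes "0 \<le> a" "a < n" "0 \<le> b" "b < n" "[a = b] (mod n)"
  shows "a = b"
  using assms by (simp add: cong_def mod_pos_pos_trivial)



theorem lemma5p5:
  fixes n B f f' :: int
  assumes "\<exists>k::nat. n = 2 ^ k" and "\<exists>k::nat. B = 2 ^ k"
    and "2 \<le> B" and "B \<le> n"
    and "f \<in> {0..<n}" and "f' \<in> {0..<n}" and "f \<noteq> f'"
  shows
    "(\<not> (n div B) dvd (f - f') \<longrightarrow>
        map_pmf (\<lambda>(\<sigma>, b). centered n (offset n B f \<sigma> b f')) (sb_pmf n)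
          = pmf_of_set {-(n div 2)..<n div 2})
   \<and> (\<forall>j::int. [f - f' = j * (n div B)] (mod n) \<and> even j \<longrightarrow>
        (\<forall>l::int. - (n div B) \<le> l \<and> l \<le> n div B \<longrightarrow>
           measure_pmf.prob (sb_pmf n)
             {(\<sigma>, b). [centered n (offset n B f \<sigma> b f') = l] (mod n)} = 0))
   \<and> (\<forall>j::int. [f - f' = j * (n div B)] (mod n) \<and> odd j \<longrightarrow>
        (\<forall>l::int. - (real_of_int n / (2 * real_of_int B)) \<le> real_of_int l
                    \<and> real_of_int l < real_of_int n / (2 * real_of_int B) \<longrightarrow>
           measure_pmf.prob (sb_pmf n)
             {(\<sigma>, b). [centered n (offset n B f \<sigma> b f') = l] (mod n)} = 0)
      \<and> (\<forall>l::int. (- (real_of_int n / real_of_int B) \<le> real_of_int l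
                       \<and> real_of_int l < - (real_of_int n / (2 * real_of_int B)))
                  \<or> (real_of_int n / (2 * real_of_int B) \<le> real_of_int l
                       \<and> real_of_int l \<le> real_of_int n / real_of_int B) \<longrightarrow>
           measure_pmf.prob (sb_pmf n)
             {(\<sigma>, b). [centered n (offset n B f \<sigma> b f') = l] (mod n)} = 2 / real_of_int n))"
proof -
  obtain kn :: nat where kn: "n = 2^kn" using assms(1) by blast
  obtain kB :: nat where kB: "B = 2^kB" using assms(2) by blast
  have "(2::int)^kB \<le> 2^kn" using kB kn assms(4) by simp
  then have kBn: "kB \<le> kn" by (simp add: power_le_imp_le_exp)
  have kB1: "kB \<ge> 1" using kB assms(3) by (cases kB) auto
  define kq where "kq = kn - kB"
  define q :: int where "q = 2^kq"
  have nBq: "n = B*q" unfolding kn kB q_def kq_def using kBn by (simp add: power_add[symmetric])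
  have B0: "0 < B" using assms(3) by simp
  have q0: "0 < q" unfolding q_def by simp
  have ndiv: "n div B = q" using nBq B0 by simp
  have qe: "even q \<or> q = 1" unfolding q_def by (cases kq) auto
  have eB: "even B" unfolding kB using kB1 by (cases kB) auto
  have ne: "even n" using nBq eB by simp
  have n0: "n > 0" using nBq B0 q0 by simp
  have copn: "coprime \<sigma> n" if "odd \<sigma>" for \<sigma> :: int unfolding kn using that by simp
  have copB: "coprime \<sigma> B" if "odd \<sigma>" for \<sigma> :: int unfolding kB using that by simp
  define h where "h = q div 2"
  have h1: "2*h \<le> q" "q \<le> 2*h + 1" unfolding h_def by linarith+
  have h0: "0 \<le> h" "h < q" unfolding h_def using q0 by linarith+
  define \<Delta> where "\<Delta> = f - f'"
  have nd: "\<not> n dvd \<Delta>"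
  proof
    assume "n dvd \<Delta>"
    moreover have "\<Delta> \<noteq> 0" using assms(7) unfolding \<Delta>_def by simp
    ultimately have "\<bar>n\<bar> \<le> \<bar>\<Delta>\<bar>" by (simp add: dvd_imp_le_int)
    then show False using assms(5,6) unfolding \<Delta>_def by auto
  qed
  have PF: "measure_pmf.prob (sb_pmf n) {(\<sigma>, b). [centered n (offset n B f \<sigma> b f') = l] (mod n)}
    = real (nat B * card {\<sigma>\<in>{s\<in>{0..<n}. odd s}. (l + h + \<sigma>*\<Delta>) mod n < q})
       / (real_of_int (n div 2) * real_of_int n)" for l
    unfolding h_def \<Delta>_def by (rule prob_formula[OF nBq B0 q0 qe ndiv ne copn])
  have rq: "real_of_int n / real_of_int B = real_of_int q" using nBq B0 by simp
  have rq2: "real_of_int n / (2 * real_of_int B) = real_of_int q / 2" using nBq B0 by simp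
  have rn2: "real_of_int (n div 2) = real_of_int n / 2" using ne by (simp add: real_of_int_div)
  have P1: "measure_pmf.prob (sb_pmf n) {(\<sigma>, b). [centered n (offset n B f \<sigma> b f') = l] (mod n)} = 1 / real_of_int n"
    if nq: "\<not> q dvd \<Delta>" for l
  proof -
    have "\<Delta> \<noteq> 0" using nq by auto
    then obtain a w where aw: "\<Delta> = 2^a * w" "odd w" using odd_decomp by blast
    have akq: "a < kq"
    proof (rule ccontr)
      assume "\<not> a < kq"
      then have "q dvd 2^a" unfolding q_def by (simp add: le_imp_power_dvd)
      then show False using nq aw(1) by (meson dvd_mult2)
    qed
    define p :: int where "p = 2^a"
    define g :: int where "g = 2*p"
    define Q :: int where "Q = 2^(kq - a - 1)"
    define M :: int where "M = 2^(kn - a - 1)"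
    have gpow: "g = 2^(a+1)" unfolding g_def p_def by simp
    have e1: "kq = (a+1) + (kq - a - 1)" using akq by simp
    have "q = 2^((a+1) + (kq - a - 1))" unfolding q_def using e1 by simp
    then have qQ: "q = g*Q" by (simp only: power_add gpow Q_def)
    have e2: "kn = (a+1) + (kn - a - 1)" using akq kq_def kBn by simp
    have "n = 2^((a+1) + (kn - a - 1))" unfolding kn using e2 by simp
    then have nM: "n = g*M" by (simp only: power_add gpow M_def)
    have QM: "Q \<le> M" unfolding Q_def M_def using kq_def by (simp add: power_increasing)
    have cop: "coprime w M" unfolding M_def using aw(2) by simp
    have c: "card {\<sigma>\<in>{s\<in>{0..<n}. odd s}. (l + h + \<sigma>*\<Delta>) mod n < q} = nat (p*Q)"
    proof -
      have D: "\<Delta> = p*w" using aw(1) p_def by simp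
      have p0: "0 < p" "0 < M" "0 \<le> Q" unfolding p_def M_def Q_def by simp_all
      show ?thesis by (rule part1[OF nBq B0 q0 D aw(2) g_def qQ nM p0 QM cop])
    qed
    have rB: "real (nat B * nat (p*Q)) = real_of_int n / 2"
      using nBq qQ g_def B0 by (simp add: p_def Q_def)
    have "measure_pmf.prob (sb_pmf n) {(\<sigma>, b). [centered n (offset n B f \<sigma> b f') = l] (mod n)}
       = (real_of_int n / 2) / (real_of_int n / 2 * real_of_int n)"
      using PF[of l] by (simp only: c rB rn2)
    then show ?thesis using n0 by simp
  qed
  show ?thesis
  proof (intro conjI impI allI)
    assume nq: "\<not> n div B dvd f - f'"
    show "map_pmf (\<lambda>(\<sigma>, b). centered n (offset n B f \<sigma> b f')) (sb_pmf n) = pmf_of_set {- (n div 2)..<n div 2}"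
    proof (rule pmf_eqI)
      fix y
      define A where "A = {- (n div 2)..<n div 2}"
      have cA: "card A = nat n" unfolding A_def using ne by simp
      have Ane: "A \<noteq> {}" "finite A" unfolding A_def using n0 ne by auto
      have inA: "centered n x \<in> A" for x unfolding A_def by (rule centered_range[OF n0 ne])
      show "pmf (map_pmf (\<lambda>(\<sigma>, b). centered n (offset n B f \<sigma> b f')) (sb_pmf n)) y
          = pmf (pmf_of_set {- (n div 2)..<n div 2}) y"
      proof (cases "y \<in> A")
        case True
        have "(\<lambda>(\<sigma>, b). centered n (offset n B f \<sigma> b f')) -` {y}
            = {(\<sigma>, b). [centered n (offset n B f \<sigma> b f') = y] (mod n)}"
        proof (rule set_eqI)
          fix x :: "int \<times> int"
          obtain \<sigma> b where x: "x = (\<sigma>, b)" by fastforce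
          define v where "v = centered n (offset n B f \<sigma> b f')"
          have "v \<in> A" unfolding v_def by (rule inA)
          have "[v = y] (mod n) \<Longrightarrow> v = y"
          proof -
            assume vy: "[v = y] (mod n)"
            have "[v + n div 2 = y + n div 2] (mod n)" using vy by (simp add: cong_add_rcancel)
            then have "v + n div 2 = y + n div 2"
              using \<open>v \<in> A\<close> True ne by (intro cong_in_range) (auto simp: A_def)
            then show "v = y" by simp
          qed
          then show "x \<in> (\<lambda>(\<sigma>, b). centered n (offset n B f \<sigma> b f')) -` {y}
            \<longleftrightarrow> x \<in> {(\<sigma>, b). [centered n (offset n B f \<sigma> b f') = y] (mod n)}"
            unfolding x v_def by auto
        qed
        then have "pmf (map_pmf (\<lambda>(\<sigma>, b). centered n (offset n B f \<sigma> b f')) (sb_pmf n)) y = 1 / real_of_int n"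
          using P1[of y] nq by (simp add: pmf_map ndiv \<Delta>_def)
        moreover have "pmf (pmf_of_set A) y = 1 / real_of_int n"
          using Ane True cA n0 by simp
        ultimately show ?thesis by (simp add: A_def)
      next
        case False
        have "(\<lambda>(\<sigma>, b). centered n (offset n B f \<sigma> b f')) -` {y} = {}"
          using inA False by auto
        then have "pmf (map_pmf (\<lambda>(\<sigma>, b). centered n (offset n B f \<sigma> b f')) (sb_pmf n)) y = 0"
          by (simp add: pmf_map)
        moreover have "pmf (pmf_of_set A) y = 0" using Ane False by simp
        ultimately show ?thesis by (simp add: A_def)
      qed
    qed
  next
    fix j l :: int
    assume jj: "[f - f' = j * (n div B)] (mod n) \<and> even j" and ll: "- (n div B) \<le> l \<and> l \<le> n div B"
    have cg: "[\<Delta> = j*q] (mod n)" using jj ndiv unfolding \<Delta>_def by simp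
    have "card {\<sigma>\<in>{s\<in>{0..<n}. odd s}. (l + h + \<sigma>*\<Delta>) mod n < q} = 0"
    proof -
      have E: "{\<sigma>\<in>{s\<in>{0..<n}. odd s}. (l + h + \<sigma>*\<Delta>) mod n < q} = {}"
      proof (rule equals0I)
        fix \<sigma> assume s: "\<sigma> \<in> {\<sigma>\<in>{s\<in>{0..<n}. odd s}. (l + h + \<sigma>*\<Delta>) mod n < q}"
        have "\<not> (l + h + \<sigma>*\<Delta>) mod n < q"
          by (rule part2_sigma[OF nBq B0 q0 eB _ _ nd cg _ _ h0])
             (use jj ll ndiv s copB in auto)
        then show False using s by simp
      qed
      show ?thesis by (simp only: E card.empty)
    qed
    then show "measure_pmf.prob (sb_pmf n) {(\<sigma>, b). [centered n (offset n B f \<sigma> b f') = l] (mod n)} = 0"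
      using PF[of l] by simp
  next
    fix j l :: int
    assume jj: "[f - f' = j * (n div B)] (mod n) \<and> odd j"
      and ll: "- (real_of_int n / (2 * real_of_int B)) \<le> real_of_int l \<and> real_of_int l < real_of_int n / (2 * real_of_int B)"
    have cg: "[\<Delta> = j*q] (mod n)" using jj ndiv unfolding \<Delta>_def by simp
    have l2: "-q \<le> 2*l" "2*l < q" using ll rq2 by linarith+
    have c1: "0 \<le> l + h" "l + h < q" using l2 h1 by linarith+
    have E: "{\<sigma>\<in>{s\<in>{0..<n}. odd s}. (l + h + \<sigma>*\<Delta>) mod n < q} = {}"
    proof (rule equals0I)
      fix \<sigma> assume s: "\<sigma> \<in> {\<sigma>\<in>{s\<in>{0..<n}. odd s}. (l + h + \<sigma>*\<Delta>) mod n < q}"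
      have "\<not> (l + h + \<sigma>*\<Delta>) mod n < q"
        by (rule part3a_sigma[OF nBq B0 q0 eB _ _ cg c1]) (use jj s in auto)
      then show False using s by simp
    qed
    then have "card {\<sigma>\<in>{s\<in>{0..<n}. odd s}. (l + h + \<sigma>*\<Delta>) mod n < q} = 0"
      by (simp only: E card.empty)
    then show "measure_pmf.prob (sb_pmf n) {(\<sigma>, b). [centered n (offset n B f \<sigma> b f') = l] (mod n)} = 0"
      using PF[of l] by simp
  next
    fix j l :: int
    assume jj: "[f - f' = j * (n div B)] (mod n) \<and> odd j"
      and ll: "- (real_of_int n / real_of_int B) \<le> real_of_int l \<and> real_of_int l < - (real_of_int n / (2 * real_of_int B))
        \<or> real_of_int n / (2 * real_of_int B) \<le> real_of_int l \<and> real_of_int l \<le> real_of_int n / real_of_int B"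
    have cg: "[\<Delta> = j*q] (mod n)" using jj ndiv unfolding \<Delta>_def by simp
    have copj: "coprime j B" using jj copB by simp
    have "\<exists>c0 e. l + h = c0 + q*e \<and> 0 \<le> c0 \<and> c0 < q \<and> odd e"
    proof (cases "real_of_int l < 0")
      case True
      then have "-q \<le> l" "2*l < -q" using ll rq rq2 by linarith+
      then show ?thesis using h1 by (intro exI[of _ "l + h + q"] exI[of _ "-1"]) auto
    next
      case False
      then have "q \<le> 2*l" "l \<le> q" using ll rq rq2 by linarith+
      then show ?thesis using h1 h0 by (intro exI[of _ "l + h - q"] exI[of _ "1"]) auto
    qed
    then obtain c0 e where ce: "l + h = c0 + q*e" "0 \<le> c0" "c0 < q" "odd e" by blast
    have "card {\<sigma>\<in>{s\<in>{0..<n}. odd s}. (l + h + \<sigma>*\<Delta>) mod n < q} = nat q"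
      by (rule part3b[OF nBq B0 q0 eB _ copj cg ce]) (use jj in auto)
    moreover have rB: "real (nat B * nat q) = real_of_int n" using nBq B0 q0 by simp
    ultimately have "measure_pmf.prob (sb_pmf n) {(\<sigma>, b). [centered n (offset n B f \<sigma> b f') = l] (mod n)}
       = real_of_int n / (real_of_int n / 2 * real_of_int n)"
      using PF[of l] by (simp only: rB rn2)
    then show "measure_pmf.prob (sb_pmf n) {(\<sigma>, b). [centered n (offset n B f \<sigma> b f') = l] (mod n)} = 2 / real_of_int n"
      using n0 by simp
  qed
qed

end
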